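(* Let $E>0$, $T>0$, $r,q\ge 0$ be constants and let $\beta:\mathbb{R}\to\mathbb{R}$ be a (sufficiently smooth) function. Let $V(t,S)$, $t\in[0,T]$, $S>0$, be a given (sufficiently smooth) function. Introduce the variables $u=\ln(S/E)$ and $\tau=T-t$, and define $$Y(\tau,u):=\partial_t V+(r-q)S\partial_S V+ S\, \beta(S\partial_S^2 V)-rV,$$ $$H(\tau,u):=S\,\partial^2_S V(t,S),$$ where the right-hand sides are evaluated at $t=T-\tau$, $S=Ee^{u}$. Then $$-\partial_\tau H+\partial_u\beta(H)+\partial^2_u\beta(H)+(r-q)\partial_u H-qH=\frac{1}{E}e^{-u}\left[\partial_u^2 Y-\partial_u Y\right].$$
   Context: In the paper $\beta(H)=\frac12\hat\sigma(H)^2H$ for a nonlinear volatility function $\hat\sigma$, $r$ is the interest rate, $q$ the dividend yield, $E$ the strike price and $T$ the maturity; the identity holds for a general function $\beta$. *)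

theory Defs
  imports "HOL-Analysis.Analysis"
begin

definition pd_t :: "(real \<Rightarrow> real \<Rightarrow> real) \<Rightarrow> real \<Rightarrow> real \<Rightarrow> real" where
  "pd_t V t S = deriv (\<lambda>t'. V t' S) t"

definition pd_S :: "(real \<Rightarrow> real \<Rightarrow> real) \<Rightarrow> real \<Rightarrow> real \<Rightarrow> real" where
  "pd_S V t S = deriv (\<lambda>S'. V t S') S"

inductive_set partials :: "(real \<Rightarrow> real \<Rightarrow> real) \<Rightarrow> (real \<Rightarrow> real \<Rightarrow> real) set"
  for V where
    base: "V \<in> partials V"
  | dt: "g \<in> partials V \<Longrightarrow> pd_t g \<in> partials V"
  | dS: "g \<in> partials V \<Longrightarrow> pd_S g \<in> partials V"

text \<open>V is C-infinity on the (open) set U of the (t,S)-plane: every iterated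
  partial derivative is (Frechet) differentiable, hence continuous, on U.\<close>
definition smooth2_on :: "(real \<times> real) set \<Rightarrow> (real \<Rightarrow> real \<Rightarrow> real) \<Rightarrow> bool" where
  "smooth2_on U V \<longleftrightarrow> (\<forall>g \<in> partials V. (case_prod g) differentiable_on U)"

definition smooth1 :: "(real \<Rightarrow> real) \<Rightarrow> bool" where
  "smooth1 f \<longleftrightarrow> (\<forall>n x. (deriv ^^ n) f differentiable (at x))"

definition Yfun :: "real \<Rightarrow> real \<Rightarrow> real \<Rightarrow> real \<Rightarrow> (real \<Rightarrow> real) \<Rightarrow> (real \<Rightarrow> real \<Rightarrow> real)
    \<Rightarrow> real \<Rightarrow> real \<Rightarrow> real" where
  "Yfun E T r q \<beta> V \<tau> u =
     (let t = T - \<tau>; S = E * exp u in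
        pd_t V t S + (r - q) * S * pd_S V t S + S * \<beta> (S * pd_S (pd_S V) t S) - r * V t S)"

definition Hfun :: "real \<Rightarrow> real \<Rightarrow> (real \<Rightarrow> real \<Rightarrow> real) \<Rightarrow> real \<Rightarrow> real \<Rightarrow> real" where
  "Hfun E T V \<tau> u = (let t = T - \<tau>; S = E * exp u in S * pd_S (pd_S V) t S)"

end

theory Submission
  imports Defs
begin

lemma partial_S:
  assumes "open U" "(t,S) \<in> U" "case_prod g differentiable_on U"
  shows "((\<lambda>S'. g t S') has_real_derivative pd_S g t S) (at S)"
proof -
  have "case_prod g differentiable (at (t,S))"
    using assms differentiable_on_eq_differentiable_at by blast
  moreover have "(\<lambda>S'. (t,S')) differentiable (at S)"
    by (auto intro!: derivative_intros simp: differentiable_def)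
  ultimately have "(case_prod g \<circ> (\<lambda>S'. (t,S'))) differentiable (at S)"
    using differentiable_chain_at by fastforce
  hence "(\<lambda>S'. g t S') differentiable (at S)" by (simp add: o_def)
  thus ?thesis unfolding pd_S_def using DERIV_deriv_iff_real_differentiable by blast
qed
lemma partial_t:
  assumes "open U" "(t,S) \<in> U" "case_prod g differentiable_on U"
  shows "((\<lambda>t'. g t' S) has_real_derivative pd_t g t S) (at t)"
proof -
  have "case_prod g differentiable (at (t,S))"
    using assms differentiable_on_eq_differentiable_at by blast
  moreover have "(\<lambda>t'. (t',S)) differentiable (at t)"
    by (auto intro!: derivative_intros simp: differentiable_def)
  ultimately have "(case_prod g \<circ> (\<lambda>t'. (t',S))) differentiable (at t)"
    using differentiable_chain_at by fastforce
  hence "(\<lambda>t'. g t' S) differentiable (at t)" by (simp add: o_def)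
  thus ?thesis unfolding pd_t_def using DERIV_deriv_iff_real_differentiable by blast
qed

lemma schwarz:
  assumes U: "open U" "(t0,S0) \<in> U"
    and df: "case_prod f differentiable_on U"
    and dfS: "case_prod (pd_S f) differentiable_on U"
    and dft: "case_prod (pd_t f) differentiable_on U"
    and dftS: "case_prod (pd_t (pd_S f)) differentiable_on U"
  shows "pd_S (pd_t f) t0 S0 = pd_t (pd_S f) t0 S0"
proof -
  obtain A B where AB: "open A" "open B" "(t0,S0) \<in> A \<times> B" "A \<times> B \<subseteq> U"
    using open_prod_elim[OF U] by blast
  have "t0 \<in> A" "S0 \<in> B" using AB(3) by auto
  obtain e1 where e1: "e1 > 0" "ball t0 e1 \<subseteq> A" using AB(1) \<open>t0 \<in> A\<close> openE by blast
  obtain e2 where e2: "e2 > 0" "ball S0 e2 \<subseteq> B" using AB(2) \<open>S0 \<in> B\<close> openE by blast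
  define a where "a = S0 - e2/2"
  define b where "b = S0 + e2/2"
  define Bt where "Bt = ball t0 e1"
  have ab: "{a..b} \<subseteq> ball S0 e2" using e2 by (auto simp: a_def b_def dist_real_def)
  have sub: "Bt \<times> {a..b} \<subseteq> U" using ab e1 e2 AB(4) Bt_def by blast
  have t0B: "t0 \<in> Bt" using e1 Bt_def by simp
  have oB: "open Bt" "convex Bt" using Bt_def by auto
  have S0ab: "S0 \<in> {a<..<b}" using e2 by (simp add: a_def b_def)
  have cont_k2: "continuous_on U (case_prod (pd_t (pd_S f)))"
    using dftS differentiable_imp_continuous_on by blast
  have cont_fS: "continuous_on U (case_prod (pd_S f))"
    using dfS differentiable_imp_continuous_on by blast
  have key: "pd_t f t0 S = pd_t f t0 a + integral {a..S} (pd_t (pd_S f) t0)"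
    if S: "S \<in> {a..b}" for S
  proof -
    have subS: "Bt \<times> {a..S} \<subseteq> U" using sub S by auto
    have ftc: "(pd_S f t has_integral (f t S - f t a)) {a..S}" if t: "t \<in> Bt" for t
    proof (rule fundamental_theorem_of_calculus)
      show "a \<le> S" using S by simp
      fix x assume x: "x \<in> {a..S}"
      have "(t,x) \<in> U" using subS t x by auto
      from partial_S[OF U(1) this df] show "((\<lambda>S'. f t S') has_vector_derivative pd_S f t x) (at x within {a..S})"
        using has_real_derivative_iff_has_vector_derivative has_field_derivative_at_within by blast
    qed
    have leib: "((\<lambda>t. integral (cbox a S) (pd_S f t)) has_field_derivative integral (cbox a S) (pd_t (pd_S f) t0)) (at t0 within Bt)"
    proof (rule leibniz_rule_field_derivative[where fx="pd_t (pd_S f)"])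
      fix x t assume x: "x \<in> Bt" and t: "t \<in> cbox a S"
      have "(x,t) \<in> U" using subS x t by auto
      from partial_t[OF U(1) this dfS] show "((\<lambda>x. pd_S f x t) has_field_derivative pd_t (pd_S f) x t) (at x within Bt)"
        using has_field_derivative_at_within by blast
    next
      fix x assume x: "x \<in> Bt"
      have c1: "continuous_on {a..S} (Pair x)" by (intro continuous_intros)
      have c2: "Pair x ` {a..S} \<subseteq> U" using subS x by auto
      have "continuous_on {a..S} (pd_S f x)"
        using continuous_on_compose2[OF cont_fS c1 c2] by simp
      thus "pd_S f x integrable_on cbox a S" by (simp add: integrable_continuous_real)
    next
      show "continuous_on (Bt \<times> cbox a S) (\<lambda>(x, t). pd_t (pd_S f) x t)"
        using continuous_on_subset[OF cont_k2 subS] by simp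
    qed (use t0B oB in auto)
    hence d1: "((\<lambda>t. integral {a..S} (pd_S f t)) has_field_derivative integral {a..S} (pd_t (pd_S f) t0)) (at t0)"
      using at_within_open[OF t0B oB(1)] by simp
    have d2: "((\<lambda>t. f t S - f t a) has_field_derivative integral {a..S} (pd_t (pd_S f) t0)) (at t0)"
      by (rule has_field_derivative_transform_within_open[OF d1 oB(1) t0B])
         (use ftc in \<open>auto dest: integral_unique\<close>)
    have "(t0,S) \<in> U" "(t0,a) \<in> U" using sub t0B S by auto
    have d3: "((\<lambda>t. f t S - f t a) has_field_derivative pd_t f t0 S - pd_t f t0 a) (at t0)"
      by (intro DERIV_diff partial_t[OF U(1) _ df]) fact+
    from DERIV_unique[OF d2 d3] show ?thesis by simp
  qed
  have c1: "continuous_on {a..b} (Pair t0)" by (intro continuous_intros)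
  have c2: "Pair t0 ` {a..b} \<subseteq> U" using sub t0B by auto
  have cont2: "continuous_on {a..b} (pd_t (pd_S f) t0)"
    using continuous_on_compose2[OF cont_k2 c1 c2] by simp
  have "((\<lambda>S. integral {a..S} (pd_t (pd_S f) t0)) has_field_derivative pd_t (pd_S f) t0 S0) (at S0 within {a..b})"
    using integral_has_real_derivative[OF cont2] S0ab by auto
  hence "((\<lambda>S. integral {a..S} (pd_t (pd_S f) t0)) has_field_derivative pd_t (pd_S f) t0 S0) (at S0)"
    using at_within_interior[of S0 "{a..b}"] S0ab by simp
  hence "((\<lambda>S. pd_t f t0 a + integral {a..S} (pd_t (pd_S f) t0)) has_field_derivative 0 + pd_t (pd_S f) t0 S0) (at S0)"
    by (intro DERIV_add DERIV_const)
  hence "((\<lambda>S. pd_t f t0 a + integral {a..S} (pd_t (pd_S f) t0)) has_field_derivative pd_t (pd_S f) t0 S0) (at S0)"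
    by (simp only: add_0_left)
  hence "((\<lambda>S. pd_t f t0 S) has_field_derivative pd_t (pd_S f) t0 S0) (at S0)"
    by (rule has_field_derivative_transform_within_open[where S="{a<..<b}"]) (use S0ab in \<open>auto simp: key[symmetric]\<close>)
  thus ?thesis unfolding pd_S_def[of "pd_t f"] by (rule DERIV_imp_deriv)
qed

lemma chain_S:
  assumes "open U" "\<And>x. (t, E * exp x) \<in> U" "case_prod g differentiable_on U"
  shows "((\<lambda>x. g t (E * exp x)) has_real_derivative pd_S g t (E * exp x) * (E * exp x)) (at x)"
proof -
  have "((\<lambda>x. E * exp x) has_real_derivative E * exp x) (at x)"
    by (auto intro!: derivative_eq_intros)
  from DERIV_chain2[OF partial_S[OF assms(1,2,3)] this] show ?thesis .
qed

lemma pdS_cong: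
  assumes "open U" "(t,S) \<in> U" "case_prod g differentiable_on U" "case_prod h differentiable_on U"
    and "\<And>p. p \<in> U \<Longrightarrow> case_prod g p = case_prod h p"
  shows "pd_S g t S = pd_S h t S"
proof -
  have o: "open (Pair t -` U)"
    by (rule continuous_open_vimage[OF assms(1)]) (intro continuous_intros)
  have "((\<lambda>S'. h t S') has_real_derivative pd_S g t S) (at S)"
    by (rule has_field_derivative_transform_within_open[OF partial_S[OF assms(1,2,3)] o])
       (use assms(2,5) in auto)
  from DERIV_unique[OF this partial_S[OF assms(1,2,4)]] show ?thesis .
qed

theorem lemma2:
  fixes E T r q :: real and \<beta> :: "real \<Rightarrow> real" and V :: "real \<Rightarrow> real \<Rightarrow> real"
    and U :: "(real \<times> real) set"
  assumes "E > 0" "T > 0" "r \<ge> 0" "q \<ge> 0"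
    and "smooth1 \<beta>"
    and "open U" "{0..T} \<times> {0<..} \<subseteq> U" "smooth2_on U V"
    and "\<tau> \<in> {0..T}"
  shows "- deriv (\<lambda>s. Hfun E T V s u) \<tau>
           + deriv (\<lambda>x. \<beta> (Hfun E T V \<tau> x)) u
           + deriv (deriv (\<lambda>x. \<beta> (Hfun E T V \<tau> x))) u
           + (r - q) * deriv (\<lambda>x. Hfun E T V \<tau> x) u
           - q * Hfun E T V \<tau> u
         = (1 / E) * exp (- u) *
             (deriv (deriv (\<lambda>x. Yfun E T r q \<beta> V \<tau> x)) u - deriv (\<lambda>x. Yfun E T r q \<beta> V \<tau> x) u)"
proof -
  note oU = assms(6)
  have D: "case_prod g differentiable_on U" if "g \<in> partials V" for g
    using assms(8) that unfolding smooth2_on_def by blast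
  define t where "t = T - \<tau>"
  define s where "s = (\<lambda>x::real. E * exp x)"
  have tU: "(t, E * exp x) \<in> U" for x
    using assms(1,7,9) by (auto simp: t_def)
  have spos: "s x > 0" for x using assms(1) by (simp add: s_def)
  have PS: "((\<lambda>x. g t (s x)) has_real_derivative pd_S g t (s x) * s x) (at x)"
    if "g \<in> partials V" for g x
    unfolding s_def by (rule chain_S[OF oU tU D[OF that]])
  have Ds: "(s has_real_derivative s x) (at x)" for x
    unfolding s_def by (auto intro!: derivative_eq_intros)
  have bd0: "(\<beta> has_real_derivative deriv \<beta> y) (at y)" for y
    using assms(5) unfolding smooth1_def
    by (metis DERIV_deriv_iff_real_differentiable funpow_0)
  have bd1: "(deriv \<beta> has_real_derivative deriv (deriv \<beta>) y) (at y)" for y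
  proof -
    have "(deriv ^^ 1) \<beta> differentiable (at y)" using assms(5) unfolding smooth1_def by blast
    hence "deriv \<beta> differentiable (at y)" by simp
    thus ?thesis using DERIV_deriv_iff_real_differentiable by blast
  qed
  note P = partials.intros
  have pV: "V \<in> partials V" "pd_S V \<in> partials V" "pd_S (pd_S V) \<in> partials V"
    "pd_S (pd_S (pd_S V)) \<in> partials V" "pd_S (pd_S (pd_S (pd_S V))) \<in> partials V"
    "pd_t V \<in> partials V" "pd_S (pd_t V) \<in> partials V" "pd_S (pd_S (pd_t V)) \<in> partials V"
    "pd_t (pd_S V) \<in> partials V" "pd_t (pd_S (pd_S V)) \<in> partials V"
    "pd_S (pd_t (pd_S V)) \<in> partials V"
    by (meson P)+
  define H where "H = (\<lambda>x. s x * pd_S (pd_S V) t (s x))"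
  define H' where "H' = (\<lambda>x. s x * pd_S (pd_S V) t (s x) + s x * (pd_S (pd_S (pd_S V)) t (s x) * s x))"
  define W where "W = (\<lambda>x. deriv \<beta> (H x) * H' x)"
  have HH: "(\<lambda>x. Hfun E T V \<tau> x) = H"
    by (auto simp: Hfun_def H_def s_def t_def Let_def)
  have dH: "(H has_real_derivative H' x) (at x)" for x
    unfolding H_def H'_def
    by (rule derivative_eq_intros Ds PS pV refl)+ (simp add: algebra_simps)
  have dbH: "((\<lambda>x. \<beta> (H x)) has_real_derivative W x) (at x)" for x
    unfolding W_def using DERIV_chain2[OF bd0 dH] by (simp add: mult.commute)
  have dH': "(H' has_real_derivative
      s x * pd_S (pd_S V) t (s x) + s x * (pd_S (pd_S (pd_S V)) t (s x) * s x)
      + (s x * (pd_S (pd_S (pd_S V)) t (s x) * s x) + s x * (pd_S (pd_S (pd_S (pd_S V))) t (s x) * s x * s x + pd_S (pd_S (pd_S V)) t (s x) * s x))) (at x)" for x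
    unfolding H'_def
    by (rule derivative_eq_intros Ds PS pV refl)+ (simp add: algebra_simps)
  have "W differentiable (at u)"
    unfolding W_def real_differentiable_def
    using DERIV_mult[OF DERIV_chain2[OF bd1 dH] dH'] by blast
  hence dW: "(W has_real_derivative deriv W u) (at u)"
    using DERIV_deriv_iff_real_differentiable by blast
  have dbeta: "deriv (\<lambda>x. \<beta> (Hfun E T V \<tau> x)) = W"
    unfolding HH using dbH DERIV_imp_deriv by blast
  have dHu: "deriv (\<lambda>x. Hfun E T V \<tau> x) u = H' u"
    unfolding HH using dH DERIV_imp_deriv by blast
  define Y where "Y = (\<lambda>x. pd_t V t (s x) + (r - q) * s x * pd_S V t (s x) + s x * \<beta> (H x) - r * V t (s x))"
  define Y' where "Y' = (\<lambda>x. pd_S (pd_t V) t (s x) * s x + (r - q) * (s x * pd_S V t (s x) + s x * (pd_S (pd_S V) t (s x) * s x))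
     + (s x * \<beta> (H x) + s x * W x) - r * (pd_S V t (s x) * s x))"
  have YY: "(\<lambda>x. Yfun E T r q \<beta> V \<tau> x) = Y"
    by (auto simp: Yfun_def Y_def H_def s_def t_def Let_def)
  have dY: "(Y has_real_derivative Y' x) (at x)" for x
    unfolding Y_def Y'_def
    by (rule dbH derivative_eq_intros Ds PS pV refl)+ (simp add: algebra_simps)
  have dYd: "deriv Y = Y'" using dY DERIV_imp_deriv by blast
  have dY': "(Y' has_real_derivative
      (pd_S (pd_t V) t (s u) * s u + pd_S (pd_S (pd_t V)) t (s u) * s u * s u)
      + (r - q) * ((s u * pd_S V t (s u) + s u * (pd_S (pd_S V) t (s u) * s u))
                 + (s u * (pd_S (pd_S V) t (s u) * s u) + s u * (pd_S (pd_S (pd_S V)) t (s u) * s u * s u + pd_S (pd_S V) t (s u) * s u)))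
      + ((s u * \<beta> (H u) + s u * W u) + (s u * W u + s u * deriv W u))
      - r * (pd_S V t (s u) * s u + pd_S (pd_S V) t (s u) * s u * s u)) (at u)"
    unfolding Y'_def
    by (rule dbH dW derivative_eq_intros Ds PS pV refl)+ (simp add: algebra_simps)
  have ddY: "deriv (deriv (\<lambda>x. Yfun E T r q \<beta> V \<tau> x)) u = 
      (pd_S (pd_t V) t (s u) * s u + pd_S (pd_S (pd_t V)) t (s u) * s u * s u)
      + (r - q) * ((s u * pd_S V t (s u) + s u * (pd_S (pd_S V) t (s u) * s u))
                 + (s u * (pd_S (pd_S V) t (s u) * s u) + s u * (pd_S (pd_S (pd_S V)) t (s u) * s u * s u + pd_S (pd_S V) t (s u) * s u)))
      + ((s u * \<beta> (H u) + s u * W u) + (s u * W u + s u * deriv W u))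
      - r * (pd_S V t (s u) * s u + pd_S (pd_S V) t (s u) * s u * s u)"
    unfolding YY dYd using dY' DERIV_imp_deriv by blast
  have dYu: "deriv (\<lambda>x. Yfun E T r q \<beta> V \<tau> x) u = Y' u"
    unfolding YY dYd ..
  have tsU: "(t, s u) \<in> U" unfolding s_def by (rule tU)
  have "((\<lambda>\<sigma>. s u * pd_S (pd_S V) (T - \<sigma>) (s u)) has_real_derivative s u * (pd_t (pd_S (pd_S V)) t (s u) * (-1))) (at \<tau>)"
  proof -
    have "((\<lambda>\<sigma>. T - \<sigma>) has_real_derivative -1) (at \<tau>)"
      by (auto intro!: derivative_eq_intros)
    from DERIV_chain2[OF partial_t[OF oU _ D[OF pV(3)]] this] tsU
    have "((\<lambda>\<sigma>. pd_S (pd_S V) (T - \<sigma>) (s u)) has_real_derivative pd_t (pd_S (pd_S V)) t (s u) * (-1)) (at \<tau>)"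
      unfolding t_def by blast
    thus ?thesis by (rule DERIV_cmult)
  qed
  moreover have "(\<lambda>\<sigma>. Hfun E T V \<sigma> u) = (\<lambda>\<sigma>. s u * pd_S (pd_S V) (T - \<sigma>) (s u))"
    by (auto simp: Hfun_def s_def Let_def)
  ultimately have dtau: "deriv (\<lambda>\<sigma>. Hfun E T V \<sigma> u) \<tau> = s u * (pd_t (pd_S (pd_S V)) t (s u) * (-1))"
    using DERIV_imp_deriv by metis
  have sw1: "case_prod (pd_S (pd_t V)) p = case_prod (pd_t (pd_S V)) p" if "p \<in> U" for p
    using that schwarz[OF oU _ D[OF pV(1)] D[OF pV(2)] D[OF pV(6)] D[OF pV(9)]]
    by (cases p) auto
  have sw2: "pd_S (pd_S (pd_t V)) t (s u) = pd_S (pd_t (pd_S V)) t (s u)"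
    by (rule pdS_cong[OF oU tsU D[OF pV(7)] D[OF pV(9)] sw1])
  have sw3: "pd_S (pd_t (pd_S V)) t (s u) = pd_t (pd_S (pd_S V)) t (s u)"
    by (rule schwarz[OF oU tsU D[OF pV(2)] D[OF pV(3)] D[OF pV(9)] D[OF pV(10)]])
  have Hu: "Hfun E T V \<tau> u = H u" by (simp add: HH[symmetric])
  have su: "s u = E * exp u" by (simp add: s_def)
  have eu: "exp (-u) = 1 / exp u" by (simp add: exp_minus field_simps)
  show ?thesis
    unfolding dtau dbeta dHu ddY dYu Hu
    unfolding Y'_def H_def H'_def sw2 sw3
    using assms(1) by (simp add: su eu field_simps)
qed

end
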